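(* Let $\mathbf{C}_\rho=\mathbb{E}_{\mathbf{x}\sim\rho}[\mathbf{x}\mathbf{x}^{\top}]\in\mathbb{R}^{d\times d}$ for a distribution $\rho$ on $\mathbb{R}^d$ with finite second moments, let $\lambda>0$, and let $\Omega$ be any set of real matrices with $d$ columns. For $\mathbf{X}\in\Omega$ write $\mathbf{M}=\mathbf{X}^{\top}\mathbf{X}$ and $\mathbf{M}_\lambda=\mathbf{M}+\lambda\mathbf{I}_d$, and for $t\ge 0$ define $$\bar{\varphi}_{\lambda,t}(\mathbf{M})=\big\|\mathbf{C}_\rho^{1/2}\big(\mathbf{I}-\mathbf{M}_\lambda^{+}\mathbf{M}\big)\big\|_F^{2}+t\,\mathrm{Tr}\big(\mathbf{C}_\rho(\mathbf{M}_\lambda^{+})^{2}\mathbf{M}\big).$$ Then $$\operatorname*{argmin}_{\mathbf{X}\in\Omega}\mathrm{Tr}\big(\mathbf{C}_\rho\mathbf{M}_\lambda^{-1}\big)=\operatorname*{argmin}_{\mathbf{X}\in\Omega}\bar{\varphi}_{\lambda,\lambda}(\mathbf{M}).$$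
   Context: ${}^{+}$ denotes the Moore–Penrose pseudoinverse, $\|\cdot\|_F$ the Frobenius norm, and $\mathbf{C}_\rho^{1/2}$ the positive semidefinite square root of $\mathbf{C}_\rho$. *)

theory Defs
  imports "HOL-Analysis.Analysis" "HOL-Probability.Probability"
begin

text \<open>A real matrix with d columns (arbitrary number m of rows) is represented as the
  list of its m rows, each a vector in real^'d.  Gram matrix X^T X.\<close>
definition gram :: "(real^'d) list \<Rightarrow> real^'d^'d" where
  "gram X = (\<chi> i j. (\<Sum>r\<leftarrow>X. r $ i * r $ j))"

definition second_moment :: "(real^'d) measure \<Rightarrow> real^'d^'d" where
  "second_moment \<rho> = (\<chi> i j. \<integral>x. x $ i * x $ j \<partial>\<rho>)"

definition finite_second_moments :: "(real^'d) measure \<Rightarrow> bool" where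
  "finite_second_moments \<rho> \<longleftrightarrow> (\<forall>i. integrable \<rho> (\<lambda>x. (x $ i)\<^sup>2))"

definition psd :: "real^'n^'n \<Rightarrow> bool" where
  "psd A \<longleftrightarrow> transpose A = A \<and> (\<forall>v. 0 \<le> v \<bullet> (A *v v))"

definition psd_sqrt :: "real^'n^'n \<Rightarrow> real^'n^'n" where
  "psd_sqrt A = (THE S. psd S \<and> S ** S = A)"

definition pinv :: "real^'n^'m \<Rightarrow> real^'m^'n" where
  "pinv A = (THE B. A ** B ** A = A \<and> B ** A ** B = B \<and>
      transpose (A ** B) = A ** B \<and> transpose (B ** A) = B ** A)"

definition frob_norm :: "real^'n^'m \<Rightarrow> real" where
  "frob_norm A = sqrt (\<Sum>i\<in>UNIV. \<Sum>j\<in>UNIV. (A $ i $ j)\<^sup>2)"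

definition phi_bar :: "real^'d^'d \<Rightarrow> real \<Rightarrow> real \<Rightarrow> real^'d^'d \<Rightarrow> real" where
  "phi_bar C lam t M =
     (let Ml = M + lam *\<^sub>R mat 1 in
      (frob_norm (psd_sqrt C ** (mat 1 - pinv Ml ** M)))\<^sup>2
      + t * trace (C ** (pinv Ml ** pinv Ml) ** M))"

definition argmin_on :: "'a set \<Rightarrow> ('a \<Rightarrow> real) \<Rightarrow> 'a set" where
  "argmin_on \<Omega> f = {X \<in> \<Omega>. \<forall>Y\<in>\<Omega>. f X \<le> f Y}"

end

theory Submission
  imports Defs
begin


lemma quad_zero:
  fixes b c :: real
  assumes "\<And>t. 2*t*b + t\<^sup>2*c \<le> 0"
  shows "b = 0"
proof (rule ccontr)
  assume nz: "b \<noteq> 0"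
  define k where "k = \<bar>c\<bar> + 1"
  have k: "k > 0" "\<bar>c\<bar> < k" unfolding k_def by auto
  have "2*(b/k)*b + (b/k)\<^sup>2*c \<le> 0" using assms by blast
  moreover have "2*(b/k)*b + (b/k)\<^sup>2*c = (b\<^sup>2/k) * (2 + c/k)"
    using k(1) by (simp add: power2_eq_square field_simps)
  moreover have "b\<^sup>2/k > 0" using nz k by auto
  moreover have "2 + c/k > 0" using k by (auto simp: field_simps abs_less_iff)
  ultimately show False by (metis mult_pos_pos not_le)
qed

lemma mat_axis: "((A::real^'n^'m) *v axis j 1) $ i = A $ i $ j"
  by (simp add: matrix_vector_mult_def axis_def if_distrib cong: if_cong)

lemma sym_inner:
  fixes A :: "real^'n^'n"
  assumes "transpose A = A"
  shows "(A *v x) \<bullet> y = x \<bullet> (A *v y)"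
  by (metis assms dot_lmul_matrix vector_transpose_matrix)

lemma sym_from_inner:
  fixes A :: "real^'n^'n"
  assumes "\<And>x y. (A *v x) \<bullet> y = x \<bullet> (A *v y)"
  shows "transpose A = A"
proof -
  have "A $ i $ j = A $ j $ i" for i j
  proof -
    have "A $ i $ j = (A *v axis j 1) \<bullet> axis i 1" by (simp add: inner_axis mat_axis)
    also have "\<dots> = axis j 1 \<bullet> (A *v axis i 1)" by (rule assms)
    also have "\<dots> = A $ j $ i" by (simp add: inner_axis' mat_axis)
    finally show ?thesis .
  qed
  then show ?thesis by (simp add: transpose_def vec_eq_iff)
qed


lemma psd_zero_quad:
  fixes S :: "real^'n^'n"
  assumes "psd S" "x \<bullet> (S *v x) = 0"
  shows "S *v x = 0"
proof -
  define z where "z = S *v x"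
  have sym: "transpose S = S" using assms(1) unfolding psd_def by auto
  have "2*t*(-(z \<bullet> z)) + t\<^sup>2*(-(z \<bullet> (S *v z))) \<le> 0" for t
  proof -
    have "0 \<le> (x + t *\<^sub>R z) \<bullet> (S *v (x + t *\<^sub>R z))" using assms(1) unfolding psd_def by blast
    also have "\<dots> = x \<bullet> (S *v x) + t * (x \<bullet> (S *v z)) + t * (z \<bullet> (S *v x)) + t\<^sup>2 * (z \<bullet> (S *v z))"
      by (simp add: algebra_simps inner_add_left inner_add_right power2_eq_square)
    also have "x \<bullet> (S *v z) = z \<bullet> z" using sym_inner[OF sym, of x z] z_def by (simp add: inner_commute)
    finally show ?thesis using assms(2) z_def by (simp add: power2_eq_square)
  qed
  then have "- (z \<bullet> z) = 0" by (rule quad_zero)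
  then show ?thesis using z_def by simp
qed

lemma psd_sym: "psd S \<Longrightarrow> transpose S = S" unfolding psd_def by auto
lemma psd_nonneg: "psd S \<Longrightarrow> 0 \<le> v \<bullet> (S *v v)" unfolding psd_def by auto

lemma transpose_add': "transpose (A + B) = transpose A + transpose (B::'a::semiring_1^'n^'m)"
  by (simp add: transpose_def vec_eq_iff)

lemma psd_add: "psd A \<Longrightarrow> psd B \<Longrightarrow> psd (A + B)"
  unfolding psd_def by (auto simp: transpose_add' matrix_vector_mult_add_rdistrib inner_add_right add_nonneg_nonneg)

lemma psd_mat1: "psd (mat 1 :: real^'n^'n)"
  unfolding psd_def by simp

lemma eigen_exists:
  fixes A :: "real^'n^'n" and B :: "(real^'n) set"
  assumes sym: "transpose A = A"
    and Beig: "\<And>b. b \<in> B \<Longrightarrow> \<exists>\<mu>. A *v b = \<mu> *\<^sub>R b"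
    and x: "x \<noteq> 0" "\<And>b. b \<in> B \<Longrightarrow> b \<bullet> x = 0"
  shows "\<exists>u. norm u = 1 \<and> (\<forall>b\<in>B. b \<bullet> u = 0) \<and> (\<exists>\<mu>. A *v u = \<mu> *\<^sub>R u)"
proof -
  define V where "V = (\<Inter>b\<in>B. {v. b \<bullet> v = 0})"
  have memV: "v \<in> V \<longleftrightarrow> (\<forall>b\<in>B. b \<bullet> v = 0)" for v unfolding V_def by auto
  have clV: "closed V" unfolding V_def by (intro closed_INT ballI closed_hyperplane)
  define K where "K = V \<inter> sphere 0 1"
  have cK: "compact K" unfolding K_def by (intro closed_Int_compact clV compact_sphere)
  have "x /\<^sub>R norm x \<in> K" using x unfolding K_def by (auto simp: memV inner_scaleR_right)
  then have neK: "K \<noteq> {}" by auto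
  define f where "f v = v \<bullet> (A *v v)" for v
  have cf: "continuous_on K f" unfolding f_def
    by (intro continuous_intros linear_continuous_on matrix_vector_mul_bounded_linear)
  obtain u where uK: "u \<in> K" and umax: "\<And>y. y \<in> K \<Longrightarrow> f y \<le> f u"
    using continuous_attains_sup[OF cK neK cf] by blast
  define l where "l = f u"
  have uV: "u \<in> V" and nu: "norm u = 1" using uK unfolding K_def by auto
  have uu: "u \<bullet> u = 1" using nu by (simp add: norm_eq_1)
  have bound: "v \<bullet> (A *v v) \<le> l * (v \<bullet> v)" if "v \<in> V" for v
  proof (cases "v = 0")
    case True then show ?thesis by simp
  next
    case False
    have "v /\<^sub>R norm v \<in> K" using False that unfolding K_def by (auto simp: memV inner_scaleR_right)
    then have "f (v /\<^sub>R norm v) \<le> l" using umax l_def by auto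
    then have "(v \<bullet> (A *v v)) / (norm v)\<^sup>2 \<le> l"
      by (simp add: f_def matrix_vector_mult_scaleR power2_eq_square divide_inverse mult_ac)
    moreover have "(norm v)\<^sup>2 = v \<bullet> v" by (simp add: power2_norm_eq_inner)
    moreover have "(norm v)\<^sup>2 > 0" using False by simp
    ultimately show ?thesis by (simp add: divide_le_eq mult.commute)
  qed
  have AV: "A *v v \<in> V" if "v \<in> V" for v
  proof -
    have "b \<bullet> (A *v v) = 0" if bB: "b \<in> B" for b
    proof -
      obtain \<mu> where "A *v b = \<mu> *\<^sub>R b" using Beig[OF bB] by blast
      then have "b \<bullet> (A *v v) = \<mu> * (b \<bullet> v)" using sym_inner[OF sym, of b v] by simp
      then show ?thesis using \<open>v \<in> V\<close> bB memV by simp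
    qed
    then show ?thesis using memV by auto
  qed
  define w where "w = A *v u - l *\<^sub>R u"
  have wV: "w \<in> V" using AV[OF uV] uV unfolding w_def memV by (simp add: inner_diff_right)
  have wu: "w \<bullet> u = 0"
    unfolding w_def using uu sym_inner[OF sym, of u u] by (simp add: inner_diff_left l_def f_def)
  have "2*t*(w \<bullet> (A *v u)) + t\<^sup>2*(w \<bullet> (A *v w) - l * (w \<bullet> w)) \<le> 0" for t
  proof -
    have "u + t *\<^sub>R w \<in> V" using uV wV unfolding memV by (simp add: inner_add_right)
    from bound[OF this]
    have h: "(u + t *\<^sub>R w) \<bullet> (A *v (u + t *\<^sub>R w)) \<le> l * ((u + t *\<^sub>R w) \<bullet> (u + t *\<^sub>R w))" .
    have e1: "(u + t *\<^sub>R w) \<bullet> (A *v (u + t *\<^sub>R w)) = u \<bullet> (A *v u) + t * (u \<bullet> (A *v w)) + t * (w \<bullet> (A *v u)) + t\<^sup>2 * (w \<bullet> (A *v w))"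
      by (simp add: algebra_simps inner_add_left inner_add_right power2_eq_square)
    have e2: "u \<bullet> (A *v w) = w \<bullet> (A *v u)" using sym_inner[OF sym, of u w] by (simp add: inner_commute)
    have e3: "(u + t *\<^sub>R w) \<bullet> (u + t *\<^sub>R w) = 1 + t\<^sup>2 * (w \<bullet> w)"
      using uu wu by (simp add: algebra_simps inner_add_left inner_add_right power2_eq_square inner_commute)
    have e4: "u \<bullet> (A *v u) = l" by (simp add: l_def f_def)
    have e5: "l * (1 + t\<^sup>2 * (w \<bullet> w)) = l + t\<^sup>2 * (l * (w \<bullet> w))" by (simp add: algebra_simps)
    have e6: "t\<^sup>2*(w \<bullet> (A *v w) - l * (w \<bullet> w)) = t\<^sup>2*(w \<bullet> (A *v w)) - t\<^sup>2 * (l * (w \<bullet> w))"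
      by (simp add: algebra_simps)
    show ?thesis using h unfolding e1 e2 e3 e4 e5 e6 by linarith
  qed
  then have wAu: "w \<bullet> (A *v u) = 0" by (rule quad_zero)
  have "w \<bullet> w = w \<bullet> (A *v u) - l * (w \<bullet> u)" by (simp add: w_def inner_diff_right)
  then have "w \<bullet> w = 0" using wAu wu by simp
  then have "w = 0" by simp
  then have "A *v u = l *\<^sub>R u" unfolding w_def by simp
  then show ?thesis using nu uV memV by blast
qed



lemma orthonormal_eigen:
  fixes A :: "real^'n^'n"
  assumes sym: "transpose A = A"
  shows "k \<le> CARD('n) \<Longrightarrow> \<exists>B. finite B \<and> card B = k \<and> (\<forall>b\<in>B. norm b = 1 \<and> (\<exists>\<mu>. A *v b = \<mu> *\<^sub>R b))
           \<and> (\<forall>b\<in>B. \<forall>c\<in>B. b \<noteq> c \<longrightarrow> b \<bullet> c = 0)"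
proof (induction k)
  case 0
  then show ?case by (intro exI[of _ "{}"]) auto
next
  case (Suc k)
  then obtain B where B: "finite B" "card B = k" "\<forall>b\<in>B. norm b = 1 \<and> (\<exists>\<mu>. A *v b = \<mu> *\<^sub>R b)"
      "\<forall>b\<in>B. \<forall>c\<in>B. b \<noteq> c \<longrightarrow> b \<bullet> c = 0" by auto
  have "dim B \<le> card B" using B(1) by (intro dim_le_card) (auto intro: span_base)
  then have "dim B < DIM(real^'n)" using Suc.prems B(2) by simp
  then obtain x where x: "x \<noteq> 0" "\<And>y. y \<in> span B \<Longrightarrow> orthogonal x y"
    using orthogonal_to_subspace_exists by blast
  have xB: "b \<bullet> x = 0" if "b \<in> B" for b
    using x(2)[OF span_base[OF that]] by (simp add: orthogonal_def inner_commute)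
  have Beig: "\<And>b. b \<in> B \<Longrightarrow> \<exists>\<mu>. A *v b = \<mu> *\<^sub>R b" using B(3) by blast
  obtain u where u: "norm u = 1" "\<forall>b\<in>B. b \<bullet> u = 0" "\<exists>\<mu>. A *v u = \<mu> *\<^sub>R u"
    using eigen_exists[of A B x, OF sym Beig x(1) xB] by blast
  have uB: "u \<notin> B"
  proof
    assume "u \<in> B"
    then have "u \<bullet> u = 0" using u(2) by blast
    moreover have "u \<bullet> u = 1" using u(1) by (simp add: norm_eq_1)
    ultimately show False by simp
  qed
  show ?case
  proof (intro exI[of _ "insert u B"] conjI)
    show "finite (insert u B)" using B(1) by simp
    show "card (insert u B) = Suc k" using B(1,2) uB by simp
    show "\<forall>b\<in>insert u B. norm b = 1 \<and> (\<exists>\<mu>. A *v b = \<mu> *\<^sub>R b)" using B(3) u(1,3) by blast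
    show "\<forall>b\<in>insert u B. \<forall>c\<in>insert u B. b \<noteq> c \<longrightarrow> b \<bullet> c = 0"
      using B(4) u(2) by (auto simp: inner_commute)
  qed
qed
lemma psd_sqrt_exists:
  fixes C :: "real^'n^'n"
  assumes "psd C"
  shows "\<exists>S. psd S \<and> S ** S = C"
proof -
  have sym: "transpose C = C" using assms psd_sym by blast
  obtain B where B: "finite B" "card B = CARD('n)" "\<forall>b\<in>B. norm b = 1 \<and> (\<exists>\<mu>. C *v b = \<mu> *\<^sub>R b)"
      "\<forall>b\<in>B. \<forall>c\<in>B. b \<noteq> c \<longrightarrow> b \<bullet> c = 0"
    using orthonormal_eigen[OF sym, of "CARD('n)"] by auto
  have bb: "b \<bullet> b = 1" if "b \<in> B" for b using B(3) that by (simp add: norm_eq_1)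
  define m where "m b = b \<bullet> (C *v b)" for b
  have Cb: "C *v b = m b *\<^sub>R b" if bB: "b \<in> B" for b
  proof -
    obtain \<mu> where "C *v b = \<mu> *\<^sub>R b" using B(3) bB by blast
    moreover then have "m b = \<mu>" using bb[OF bB] by (simp add: m_def)
    ultimately show ?thesis by simp
  qed
  have m0: "m b \<ge> 0" for b using assms unfolding m_def psd_def by auto
  have orth: "\<And>b c. b \<in> B \<Longrightarrow> c \<in> B \<Longrightarrow> b \<noteq> c \<Longrightarrow> b \<bullet> c = 0" using B(4) by blast
  have pw: "pairwise orthogonal B" unfolding pairwise_def orthogonal_def using orth by blast
  have n0: "0 \<notin> B" using bb by force
  have indep: "independent B" by (rule pairwise_orthogonal_independent[OF pw n0])
  have spanB: "span B = UNIV"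
  proof -
    have "dim B = CARD('n)" using dim_span_eq_card_independent[OF indep] B(2) by (simp add: dim_span)
    then show ?thesis using dim_eq_full[of B] by simp
  qed
  define f where "f v = (\<Sum>c\<in>B. (sqrt (m c) * (c \<bullet> v)) *\<^sub>R c)" for v
  have lin: "linear f"
  proof (rule linearI)
    show "f (x + y) = f x + f y" for x y
      unfolding f_def by (simp add: inner_add_right distrib_left scaleR_add_left sum.distrib)
    show "f (r *\<^sub>R x) = r *\<^sub>R f x" for r x
      unfolding f_def by (simp add: scaleR_sum_right mult.left_commute)
  qed
  define S where "S = matrix f"
  have Sv: "S *v v = f v" for v unfolding S_def using fun_cong[OF matrix_vector_mul(2)[OF lin], of v] by simp
  have fb: "f b = sqrt (m b) *\<^sub>R b" if "b \<in> B" for b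
  proof -
    have "f b = (\<Sum>c\<in>B. if c = b then sqrt (m b) *\<^sub>R b else 0)"
      unfolding f_def by (rule sum.cong) (auto simp: orth bb that)
    also have "\<dots> = sqrt (m b) *\<^sub>R b" using B(1) that by simp
    finally show ?thesis .
  qed
  have SS: "S ** S = C"
  proof -
    have "(S ** S) *v v = C *v v" for v
    proof -
      have l1: "linear (\<lambda>v. S *v (S *v v))" using matrix_vector_mul_linear[of "S ** S"] by (simp add: matrix_vector_mul_assoc)
      have l2: "linear (\<lambda>v. C *v v)" by (rule matrix_vector_mul_linear)
      have hb: "\<And>b. b \<in> B \<Longrightarrow> S *v (S *v b) = C *v b"
      proof -
        fix b assume bB: "b \<in> B"
        have e: "S *v b = sqrt (m b) *\<^sub>R b" using Sv fb bB by simp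
        have "S *v (S *v b) = sqrt (m b) *\<^sub>R (S *v b)" by (simp add: e matrix_vector_mult_scaleR)
        also have "\<dots> = (sqrt (m b) * sqrt (m b)) *\<^sub>R b" by (simp add: e)
        also have "\<dots> = m b *\<^sub>R b" using m0[of b] by simp
        finally show "S *v (S *v b) = C *v b" using Cb[OF bB] by simp
      qed
      have hv: "v \<in> span B" using spanB by simp
      have "S *v (S *v v) = C *v v"
        using linear_eq_on_span[OF l1 l2, of B v] hb hv by blast
      then show ?thesis by (simp add: matrix_vector_mul_assoc)
    qed
    then show ?thesis by (simp add: matrix_eq)
  qed
  have "transpose S = S"
  proof (rule sym_from_inner)
    fix x y
    show "(S *v x) \<bullet> y = x \<bullet> (S *v y)"
      unfolding Sv f_def by (simp add: inner_sum_left inner_sum_right mult_ac inner_commute)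
  qed
  moreover have "0 \<le> v \<bullet> (S *v v)" for v
    unfolding Sv f_def inner_sum_right
  proof (rule sum_nonneg)
    fix c assume "c \<in> B"
    have "v \<bullet> ((sqrt (m c) * (c \<bullet> v)) *\<^sub>R c) = sqrt (m c) * ((c \<bullet> v) * (c \<bullet> v))"
      by (simp add: inner_commute)
    also have "\<dots> \<ge> 0" using m0[of c] by simp
    finally show "0 \<le> v \<bullet> ((sqrt (m c) * (c \<bullet> v)) *\<^sub>R c)" .
  qed
  ultimately have "psd S" unfolding psd_def by auto
  then show ?thesis using SS by blast
qed



lemma trace_DSD:
  fixes D S :: "real^'n^'n"
  assumes "transpose D = D"
  shows "trace (D ** S ** D) = (\<Sum>i\<in>UNIV. (D *v axis i 1) \<bullet> (S *v (D *v axis i 1)))"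
proof -
  have "(D ** S ** D) $ i $ i = (D *v axis i 1) \<bullet> (S *v (D *v axis i 1))" for i
  proof -
    have "(D ** S ** D) $ i $ i = axis i 1 \<bullet> ((D ** S ** D) *v axis i 1)" by (simp add: inner_axis' mat_axis)
    also have "\<dots> = axis i 1 \<bullet> (D *v (S *v (D *v axis i 1)))" by (simp add: matrix_vector_mul_assoc matrix_mul_assoc)
    also have "\<dots> = (D *v axis i 1) \<bullet> (S *v (D *v axis i 1))" using sym_inner[OF assms, of "axis i 1"] by simp
    finally show ?thesis .
  qed
  then show ?thesis by (simp add: trace_def)
qed

lemma trace_DSD_nonneg:
  fixes D S :: "real^'n^'n"
  assumes "psd S" "transpose D = D"
  shows "0 \<le> trace (D ** S ** D)"
  unfolding trace_DSD[OF assms(2)] by (intro sum_nonneg psd_nonneg[OF assms(1)])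

lemma trace_DSD_zero:
  fixes D S :: "real^'n^'n"
  assumes "psd S" "transpose D = D" "trace (D ** S ** D) \<le> 0"
  shows "S ** D = 0"
proof -
  have "trace (D ** S ** D) = 0" using assms trace_DSD_nonneg by (metis order.antisym)
  then have "\<forall>i\<in>UNIV. (D *v axis i 1) \<bullet> (S *v (D *v axis i 1)) = 0"
    unfolding trace_DSD[OF assms(2)]
    by (subst (asm) sum_nonneg_eq_0_iff) (auto intro: psd_nonneg[OF assms(1)])
  then have z: "S *v (D *v axis i 1) = 0" for i using psd_zero_quad[OF assms(1)] by blast
  have "(S ** D) $ j $ i = 0" for i j
  proof -
    have "(S ** D) $ j $ i = ((S ** D) *v axis i 1) $ j" by (simp add: mat_axis)
    also have "\<dots> = 0" using z[of i] by (simp add: matrix_vector_mul_assoc)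
    finally show ?thesis .
  qed
  then show ?thesis by (simp add: vec_eq_iff)
qed

lemma transpose_diff': "transpose (A - B) = transpose A - transpose (B::'a::ring_1^'n^'m)"
  by (simp add: transpose_def vec_eq_iff)

lemma matrix_diff_ldistrib: "(A::'a::ring_1^'n^'m) ** (B - C) = A ** B - A ** C"
  by (simp add: matrix_matrix_mult_def vec_eq_iff sum_subtractf right_diff_distrib)

lemma matrix_diff_rdistrib: "((A::'a::ring_1^'n^'m) - B) ** C = A ** C - B ** C"
  by (simp add: matrix_matrix_mult_def vec_eq_iff sum_subtractf left_diff_distrib)

lemma trace_zero': "trace (0::real^'n^'n) = 0" by (simp add: trace_def)

lemma psd_unique:
  fixes S T :: "real^'n^'n"
  assumes S: "psd S" and T: "psd T" and eq: "S ** S = T ** T"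
  shows "S = T"
proof -
  define D where "D = S - T"
  have symD: "transpose D = D" unfolding D_def using psd_sym[OF S] psd_sym[OF T] by (simp add: transpose_diff')
  have key: "S ** D + D ** T = 0"
    unfolding D_def by (simp add: matrix_diff_ldistrib matrix_diff_rdistrib eq)
  have "trace (D ** S ** D) + trace (D ** T ** D) = trace (D ** (S ** D + D ** T))"
  proof -
    have "trace (D ** (D ** T)) = trace (D ** T ** D)" by (simp add: trace_mul_sym[of D "D ** T"])
    then show ?thesis by (simp add: matrix_add_ldistrib trace_add matrix_mul_assoc)
  qed
  also have "\<dots> = 0" by (simp add: key trace_zero')
  finally have sum0: "trace (D ** S ** D) + trace (D ** T ** D) = 0" .
  have n1: "0 \<le> trace (D ** S ** D)" by (rule trace_DSD_nonneg[OF S symD])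
  have n2: "0 \<le> trace (D ** T ** D)" by (rule trace_DSD_nonneg[OF T symD])
  have SD: "S ** D = 0" using trace_DSD_zero[OF S symD] sum0 n1 n2 by linarith
  have TD: "T ** D = 0" using trace_DSD_zero[OF T symD] sum0 n1 n2 by linarith
  have DD: "D ** D = 0" unfolding D_def using SD TD by (simp add: matrix_diff_rdistrib D_def)
  have "mat 1 ** D = 0"
    by (rule trace_DSD_zero[OF psd_mat1 symD]) (simp add: DD trace_zero')
  then have "D = 0" by simp
  then show ?thesis unfolding D_def by simp
qed

lemma psd_sqrt_props:
  fixes C :: "real^'n^'n"
  assumes "psd C"
  shows "psd (psd_sqrt C) \<and> psd_sqrt C ** psd_sqrt C = C"
proof -
  have "\<exists>!S. psd S \<and> S ** S = C"
    using psd_sqrt_exists[OF assms] psd_unique by metis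
  then show ?thesis unfolding psd_sqrt_def by (rule theI')
qed


lemma psd_zero: "psd (0::real^'n^'n)"
  unfolding psd_def by (simp add: transpose_def vec_eq_iff)

lemma gram_Nil: "gram [] = 0" by (simp add: gram_def vec_eq_iff)

lemma gram_Cons: "gram (r # X) = (\<chi> i j. r$i * r$j) + gram X" by (simp add: gram_def vec_eq_iff)

lemma psd_outer: "psd ((\<chi> i j. r$i * r$j) :: real^'n^'n)"
proof -
  have t: "transpose ((\<chi> i j. r$i * r$j) :: real^'n^'n) = (\<chi> i j. r$i * r$j)"
    by (simp add: transpose_def vec_eq_iff mult.commute)
  have mv: "((\<chi> i j. r$i * r$j) :: real^'n^'n) *v v = (r \<bullet> v) *\<^sub>R r" for v
    by (simp add: matrix_vector_mult_def vec_eq_iff inner_vec_def sum_distrib_left mult_ac)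
  have "0 \<le> v \<bullet> (((\<chi> i j. r$i * r$j) :: real^'n^'n) *v v)" for v
    unfolding mv by (simp add: inner_commute)
  then show ?thesis using t unfolding psd_def by auto
qed

lemma psd_gram: "psd (gram X)"
  by (induction X) (simp_all add: gram_Nil gram_Cons psd_add psd_outer psd_zero)

lemma scaleR_mat_vec: "((k::real) *\<^sub>R (A::real^'n^'m)) *v x = k *\<^sub>R (A *v x)"
  by (simp add: matrix_vector_mult_def vec_eq_iff sum_distrib_left mult.assoc)

lemma Ml_props:
  fixes M :: "real^'n^'n"
  assumes "psd M" "lam > 0"
  shows "invertible (M + lam *\<^sub>R mat 1) \<and> transpose (M + lam *\<^sub>R mat 1) = M + lam *\<^sub>R mat 1"
proof
  have "\<forall>x. (M + lam *\<^sub>R mat 1) *v x = 0 \<longrightarrow> x = 0"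
  proof (intro allI impI)
    fix x assume h: "(M + lam *\<^sub>R mat 1) *v x = 0"
    have "0 = x \<bullet> ((M + lam *\<^sub>R mat 1) *v x)" using h by simp
    also have "\<dots> = x \<bullet> (M *v x) + lam * (x \<bullet> x)"
      by (simp add: matrix_vector_mult_add_rdistrib scaleR_mat_vec inner_add_right)
    finally have "lam * (x \<bullet> x) \<le> 0" using psd_nonneg[OF assms(1), of x] by linarith
    then have "x \<bullet> x \<le> 0" using assms(2) by (simp add: mult_le_0_iff)
    then show "x = 0" by (metis inner_eq_zero_iff inner_ge_zero order.antisym)
  qed
  then show "invertible (M + lam *\<^sub>R mat 1)"
    unfolding invertible_left_inverse matrix_left_invertible_ker by blast
  show "transpose (M + lam *\<^sub>R mat 1) = M + lam *\<^sub>R mat 1"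
    using psd_sym[OF assms(1)] by (simp add: transpose_add' transpose_scalar)
qed

lemma matrix_inv_props:
  fixes A :: "real^'n^'n"
  assumes "invertible A"
  shows "A ** matrix_inv A = mat 1 \<and> matrix_inv A ** A = mat 1"
  using assms unfolding invertible_def matrix_inv_def by (rule someI_ex)

lemma matrix_inv_sym:
  fixes A :: "real^'n^'n"
  assumes "invertible A" "transpose A = A"
  shows "transpose (matrix_inv A) = matrix_inv A"
proof -
  define B where "B = matrix_inv A"
  have AB: "A ** B = mat 1" and BA: "B ** A = mat 1" using matrix_inv_props[OF assms(1)] B_def by auto
  have tBA: "transpose B ** A = mat 1"
    using AB assms(2) by (metis matrix_transpose_mul transpose_mat)
  have "transpose B = transpose B ** (A ** B)" by (simp add: AB)
  also have "\<dots> = (transpose B ** A) ** B" by (simp add: matrix_mul_assoc)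
  also have "\<dots> = B" by (simp add: tBA)
  finally show ?thesis unfolding B_def .
qed

lemma pinv_inv:
  fixes A :: "real^'n^'n"
  assumes "invertible A"
  shows "pinv A = matrix_inv A"
proof -
  define B where "B = matrix_inv A"
  have AB: "A ** B = mat 1" and BA: "B ** A = mat 1" using matrix_inv_props[OF assms(1)] B_def by auto
  have "pinv A = B" unfolding pinv_def
  proof (rule the_equality)
    show "A ** B ** A = A \<and> B ** A ** B = B \<and> transpose (A ** B) = A ** B \<and> transpose (B ** A) = B ** A"
      by (simp add: AB BA)
    fix B' assume h: "A ** B' ** A = A \<and> B' ** A ** B' = B' \<and> transpose (A ** B') = A ** B' \<and> transpose (B' ** A) = B' ** A"
    have "B' = (B ** A) ** B' ** (A ** B)" by (simp add: AB BA)
    also have "\<dots> = B ** (A ** B' ** A) ** B" by (simp add: matrix_mul_assoc)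
    also have "\<dots> = B ** A ** B" using h by simp
    also have "\<dots> = B" by (simp add: BA)
    finally show "B' = B" .
  qed
  then show ?thesis unfolding B_def .
qed

lemma frob_sq:
  fixes B :: "real^'n^'m"
  shows "(frob_norm B)\<^sup>2 = trace (transpose B ** B)"
proof -
  have "(frob_norm B)\<^sup>2 = (\<Sum>i\<in>UNIV. \<Sum>j\<in>UNIV. (B $ i $ j)\<^sup>2)"
    unfolding frob_norm_def by (simp add: sum_nonneg)
  also have "\<dots> = (\<Sum>j\<in>UNIV. \<Sum>i\<in>UNIV. B $ i $ j * B $ i $ j)"
    by (subst sum.swap) (simp add: power2_eq_square)
  also have "\<dots> = trace (transpose B ** B)"
    by (simp add: trace_def matrix_matrix_mult_def transpose_def)
  finally show ?thesis .
qed

lemma trace_scaleR: "trace ((k::real) *\<^sub>R A) = k * trace (A::real^'n^'n)"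
  by (simp add: trace_def sum_distrib_left)

lemma phi_eq:
  fixes C M :: "real^'n^'n"
  assumes C: "psd C" and M: "psd M" and lam: "lam > 0"
  shows "phi_bar C lam lam M = lam * trace (C ** matrix_inv (M + lam *\<^sub>R mat 1))"
proof -
  define Ml where "Ml = M + lam *\<^sub>R mat 1"
  define A where "A = matrix_inv Ml"
  define S where "S = psd_sqrt C"
  have inv: "invertible Ml" and tMl: "transpose Ml = Ml" using Ml_props[OF M lam] Ml_def by auto
  have AMl: "A ** Ml = mat 1" and MlA: "Ml ** A = mat 1" using matrix_inv_props[OF inv] A_def by auto
  have tA: "transpose A = A" using matrix_inv_sym[OF inv tMl] A_def by simp
  have pA: "pinv Ml = A" using pinv_inv[OF inv] A_def by simp
  have tS: "transpose S = S" and SS: "S ** S = C" using psd_sqrt_props[OF C] psd_sym S_def by auto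
  have h1: "mat 1 - A ** M = lam *\<^sub>R A"
  proof -
    have "M = Ml - lam *\<^sub>R mat 1" by (simp add: Ml_def)
    then have "A ** M = A ** Ml - A ** (lam *\<^sub>R mat 1)" by (simp add: matrix_diff_ldistrib)
    also have "\<dots> = mat 1 - lam *\<^sub>R A" by (simp add: AMl matrix_scalar_ac)
    finally show ?thesis by simp
  qed
  have h2: "(frob_norm (S ** (lam *\<^sub>R A)))\<^sup>2 = lam * lam * trace (C ** (A ** A))"
  proof -
    have e: "S ** (lam *\<^sub>R A) = lam *\<^sub>R (S ** A)" by (simp add: matrix_scalar_ac scalar_matrix_assoc)
    have "transpose (lam *\<^sub>R (S ** A)) ** (lam *\<^sub>R (S ** A)) = (lam * lam) *\<^sub>R (A ** (S ** S) ** A)"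
      by (simp add: transpose_scalar matrix_transpose_mul tS tA matrix_scalar_ac scalar_matrix_assoc[symmetric] matrix_mul_assoc)
    then have "(frob_norm (S ** (lam *\<^sub>R A)))\<^sup>2 = lam * lam * trace (A ** C ** A)"
      unfolding e frob_sq by (simp add: trace_scaleR SS)
    also have "trace (A ** C ** A) = trace (C ** (A ** A))"
      by (metis trace_mul_sym matrix_mul_assoc)
    finally show ?thesis .
  qed
  have h3: "trace (C ** A) = trace (C ** (A ** A) ** M) + lam * trace (C ** (A ** A))"
  proof -
    have "C ** A = C ** (A ** A) ** Ml" by (simp add: matrix_mul_assoc[symmetric] AMl)
    also have "\<dots> = C ** (A ** A) ** M + lam *\<^sub>R (C ** (A ** A))"
      by (simp add: Ml_def matrix_add_ldistrib matrix_scalar_ac)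
    finally show ?thesis by (simp add: trace_add trace_scaleR)
  qed
  have "phi_bar C lam lam M = lam * lam * trace (C ** (A ** A)) + lam * trace (C ** (A ** A) ** M)"
    unfolding phi_bar_def Let_def Ml_def[symmetric] pA h1 S_def[symmetric] h2 by simp
  also have "\<dots> = lam * trace (C ** A)" unfolding h3 by (simp add: algebra_simps)
  finally show ?thesis unfolding A_def Ml_def .
qed

lemma argmin_scale:
  assumes "c > 0" "\<And>X. X \<in> \<Omega> \<Longrightarrow> g X = c * f X"
  shows "argmin_on \<Omega> f = argmin_on \<Omega> (g :: 'a \<Rightarrow> real)"
  using assms unfolding argmin_on_def by auto


lemma abs_mult_le_sq: "\<bar>(a::real) * b\<bar> \<le> a\<^sup>2 + b\<^sup>2"
proof -
  have "2 * (\<bar>a\<bar> * \<bar>b\<bar>) \<le> \<bar>a\<bar>\<^sup>2 + \<bar>b\<bar>\<^sup>2" using sum_squares_bound[of "\<bar>a\<bar>" "\<bar>b\<bar>"] by (simp add: mult.assoc)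
  moreover have "0 \<le> \<bar>a\<bar> * \<bar>b\<bar>" by simp
  moreover have "\<bar>a\<bar>\<^sup>2 + \<bar>b\<bar>\<^sup>2 = a\<^sup>2 + b\<^sup>2" by simp
  ultimately have "\<bar>a\<bar> * \<bar>b\<bar> \<le> a\<^sup>2 + b\<^sup>2" by linarith
  then show ?thesis by (simp add: abs_mult)
qed

lemma second_moment_psd:
  fixes \<rho> :: "(real^'d) measure"
  assumes sets: "sets \<rho> = sets borel" and fsm: "finite_second_moments \<rho>"
  shows "psd (second_moment \<rho>)"
proof -
  have mb: "(\<lambda>x. x$i * x$j) \<in> borel_measurable \<rho>" for i j
  proof -
    have eq: "borel_measurable \<rho> = borel_measurable borel" by (rule measurable_cong_sets[OF sets refl])
    show ?thesis unfolding eq by (intro borel_measurable_continuous_onI continuous_intros)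
  qed
  have int: "integrable \<rho> (\<lambda>x. x$i * x$j)" for i j
  proof -
    have i1: "integrable \<rho> (\<lambda>x. (x$i)\<^sup>2 + (x$j)\<^sup>2)" using fsm unfolding finite_second_moments_def by auto
    have ae: "AE x in \<rho>. norm (x$i * x$j) \<le> norm ((x$i)\<^sup>2 + (x$j)\<^sup>2)"
      using abs_mult_le_sq by simp
    show ?thesis by (rule Bochner_Integration.integrable_bound[OF i1 mb ae])
  qed
  define C where "C = second_moment \<rho>"
  have Cij: "C $ i $ j = (\<integral>x. x $ i * x $ j \<partial>\<rho>)" for i j unfolding C_def second_moment_def by simp
  have "transpose C = C" by (simp add: transpose_def vec_eq_iff Cij mult.commute)
  moreover have "0 \<le> v \<bullet> (C *v v)" for v
  proof -
    have "v \<bullet> (C *v v) = (\<Sum>i\<in>UNIV. \<Sum>j\<in>UNIV. v$i * v$j * C$i$j)"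
      by (simp add: inner_vec_def matrix_vector_mult_def sum_distrib_left mult_ac)
    also have "\<dots> = (\<Sum>i\<in>UNIV. \<Sum>j\<in>UNIV. (\<integral>x. v$i * v$j * (x$i * x$j) \<partial>\<rho>))"
      by (simp add: Cij)
    also have "\<dots> = (\<integral>x. (\<Sum>i\<in>UNIV. \<Sum>j\<in>UNIV. v$i * v$j * (x$i * x$j)) \<partial>\<rho>)"
      using int by (simp add: integral_sum)
    also have "\<dots> = (\<integral>x. (v \<bullet> x)\<^sup>2 \<partial>\<rho>)"
      by (simp add: inner_vec_def power2_eq_square sum_product mult_ac)
    also have "\<dots> \<ge> 0" by simp
    finally show ?thesis .
  qed
  ultimately show ?thesis unfolding psd_def C_def by auto
qed

theorem proposition6:
  fixes \<rho> :: "(real^'d) measure" and lam :: real and \<Omega> :: "(real^'d) list set"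
  assumes "prob_space \<rho>" and "sets \<rho> = sets borel"
    and "finite_second_moments \<rho>"
    and "lam > 0"
  shows "argmin_on \<Omega> (\<lambda>X. trace (second_moment \<rho> ** matrix_inv (gram X + lam *\<^sub>R mat 1)))
       = argmin_on \<Omega> (\<lambda>X. phi_bar (second_moment \<rho>) lam lam (gram X))"
proof -
  have C: "psd (second_moment \<rho>)" by (rule second_moment_psd[OF assms(2,3)])
  show ?thesis
    by (rule argmin_scale[OF assms(4)]) (rule phi_eq[OF C psd_gram assms(4)])
qed

end
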